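(* Let $\mathcal{M}=(\mathcal{S},\mathcal{A},\mathcal{P},r,p_0)$ be an infinite-horizon MDP as described in the context, let $D\in\mathbb{N}$, let $\gamma_0,\dots,\gamma_D\in(0,1)$, and let $\pi$ be a stationary policy. For $d\in\{0,\dots,D\}$ let $$Q_d^\pi(s,a):=\mathbb{E}_\pi\Big[\sum_{t=0}^\infty \Phi_d(t)\, r(s_t,a_t)\,\Big|\, s_0=s,a_0=a\Big].$$ Define the operator $T_\pi^D$ on bounded functions $q:\mathcal{S}\times\mathcal{A}\to\mathbb{R}$ by $$[T_\pi^D(q)](s,a)= r_D^\pi(s,a)+\gamma_D\,\mathbb{E}_{s'\sim\mathcal{P}(s,a),\,a'\sim\pi(s')}\big[q(s',a')\big],\qquad r_D^\pi(s,a):=\mathbb{E}_{s'\sim\mathcal{P}(s,a),\,a'\sim\pi(s')}\Big[r(s,a)+\sum_{d=0}^{D-1}\gamma_d\,Q_d^\pi(s',a')\Big].$$ Then $T_\pi^D$ is a $\gamma_D$-contraction and $Q_D^\pi$ is its unique fixed point.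
   Context: $\mathcal{S}\subseteq\mathbb{R}^{k}$ and $\mathcal{A}\subseteq\mathbb{R}^{k'}$ are finite or compact sets, $\mathcal{P}:\mathcal{S}\times\mathcal{A}\to\Delta(\mathcal{S})$ is a transition kernel, $r:\mathcal{S}\times\mathcal{A}\to\mathbb{R}$ is a continuous reward function, $p_0\in\Delta(\mathcal{S})$ an initial distribution. $\mathbb{E}_\pi$ denotes expectation over trajectories $(s_t,a_t)_{t\ge0}$ with $s_{t+1}\sim\mathcal{P}(s_t,a_t)$ and $a_t\sim\pi(s_t)$ for $t\ge1$. For discount factors $\gamma_0,\dots,\gamma_D\in(0,1)$ and $d\le D$, the delayed weights are $$\Phi_d(t):=\sum_{\substack{(a_0,\dots,a_d)\in\mathbb{N}^{d+1}\\ a_0+\dots+a_d=t}}\ \prod_{i=0}^{d}\gamma_i^{a_i},\qquad t\in\mathbb{N},$$ so that $\Phi_0(t)=\gamma_0^t$. Contraction is with respect to the supremum norm. *)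

theory Defs
  imports "HOL-Probability.Probability"
begin

definition Phi :: "(nat \<Rightarrow> real) \<Rightarrow> nat \<Rightarrow> nat \<Rightarrow> real" where
  "Phi gam d t =
     (\<Sum>a \<in> {a::nat \<Rightarrow> nat. (\<forall>i. d < i \<longrightarrow> a i = 0) \<and> (\<Sum>i\<le>d. a i) = t}.
        \<Prod>i\<le>d. gam i ^ a i)"

definition sa_step ::
  "('s \<Rightarrow> 'a \<Rightarrow> 's measure) \<Rightarrow> ('s \<Rightarrow> 'a measure) \<Rightarrow> ('s \<Rightarrow> 'a \<Rightarrow> real) \<Rightarrow> 's \<Rightarrow> 'a \<Rightarrow> real" where
  "sa_step P pol f s a = (\<integral>s'. (\<integral>a'. f s' a' \<partial>pol s') \<partial>P s a)"

text \<open>E_pi[ r(s_t,a_t) | s_0 = s, a_0 = a ] = (K^t r)(s,a); hence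
  Q_d(s,a) = sum_t Phi_d(t) * E_pi[ r(s_t,a_t) | s_0 = s, a_0 = a ].\<close>
definition Qfun ::
  "('s \<Rightarrow> 'a \<Rightarrow> 's measure) \<Rightarrow> ('s \<Rightarrow> 'a measure) \<Rightarrow> ('s \<Rightarrow> 'a \<Rightarrow> real) \<Rightarrow> (nat \<Rightarrow> real)
     \<Rightarrow> nat \<Rightarrow> 's \<Rightarrow> 'a \<Rightarrow> real" where
  "Qfun P pol r gam d s a = (\<Sum>t. Phi gam d t * ((sa_step P pol ^^ t) r) s a)"

definition TD ::
  "('s \<Rightarrow> 'a \<Rightarrow> 's measure) \<Rightarrow> ('s \<Rightarrow> 'a measure) \<Rightarrow> ('s \<Rightarrow> 'a \<Rightarrow> real) \<Rightarrow> (nat \<Rightarrow> real)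
     \<Rightarrow> nat \<Rightarrow> ('s \<Rightarrow> 'a \<Rightarrow> real) \<Rightarrow> 's \<Rightarrow> 'a \<Rightarrow> real" where
  "TD P pol r gam D q s a =
     sa_step P pol (\<lambda>s' a'. r s a + (\<Sum>d<D. gam d * Qfun P pol r gam d s' a')) s a
     + gam D * sa_step P pol q s a"

definition bfun_SA :: "'s::topological_space set \<Rightarrow> 'a::topological_space set \<Rightarrow> ('s \<Rightarrow> 'a \<Rightarrow> real) set" where
  "bfun_SA S A = {q. (\<lambda>(s,a). q s a) \<in> borel_measurable (restrict_space borel (S \<times> A))
                     \<and> bounded ((\<lambda>(s,a). q s a) ` (S \<times> A))}"

definition sup_dist :: "'s set \<Rightarrow> 'a set \<Rightarrow> ('s \<Rightarrow> 'a \<Rightarrow> real) \<Rightarrow> ('s \<Rightarrow> 'a \<Rightarrow> real) \<Rightarrow> real" where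
  "sup_dist S A q1 q2 = (SUP x\<in>S \<times> A. \<bar>q1 (fst x) (snd x) - q2 (fst x) (snd x)\<bar>)"

end

theory Submission
  imports Defs
begin

definition PhiSet :: "nat \<Rightarrow> nat \<Rightarrow> (nat \<Rightarrow> nat) set" where
  "PhiSet d t = {a::nat \<Rightarrow> nat. (\<forall>i. d < i \<longrightarrow> a i = 0) \<and> (\<Sum>i\<le>d. a i) = t}"

lemma Phi_alt: "Phi gam d t = (\<Sum>a\<in>PhiSet d t. \<Prod>i\<le>d. gam i ^ a i)"
  unfolding Phi_def PhiSet_def by simp

lemma finite_PhiSet: "finite (PhiSet d t)"
proof -
  have "PhiSet d t \<subseteq> {f. \<forall>x. (x \<in> {..d} \<longrightarrow> f x \<in> {..t}) \<and> (x \<notin> {..d} \<longrightarrow> f x = 0)}"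
  proof (intro subsetI CollectI allI conjI impI)
    fix a x assume a: "a \<in> PhiSet d t"
    { assume "x \<in> {..d}"
      then have "a x \<le> (\<Sum>i\<le>d. a i)" by (intro member_le_sum) auto
      then show "a x \<in> {..t}" using a by (auto simp: PhiSet_def) }
    { assume "x \<notin> {..d}" then show "a x = 0" using a by (auto simp: PhiSet_def) }
  qed
  then show ?thesis by (rule finite_subset) (intro finite_set_of_finite_funs, auto)
qed

lemma PhiSet_0: "PhiSet d 0 = {\<lambda>_. 0}"
proof -
  have "a \<in> PhiSet d 0 \<longleftrightarrow> a = (\<lambda>_. 0)" for a
  proof
    assume a: "a \<in> PhiSet d 0"
    have "a i = 0" for i
    proof (cases "i \<le> d")
      case True
      then have "a i \<le> (\<Sum>j\<le>d. a j)" by (intro member_le_sum) auto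
      then show ?thesis using a by (simp add: PhiSet_def)
    next
      case False
      then show ?thesis using a by (simp add: PhiSet_def)
    qed
    then have "\<forall>i. a i = 0" by blast
    then show "a = (\<lambda>_. 0)" by auto
  qed (auto simp: PhiSet_def)
  then show ?thesis by auto
qed

lemma Phi_t0: "Phi gam d 0 = 1"
  by (simp add: Phi_alt PhiSet_0)

lemma PhiSet_d0: "PhiSet 0 t = {\<lambda>i. if i = 0 then t else 0}"
  by (auto simp: PhiSet_def)

lemma Phi_d0: "Phi gam 0 t = gam 0 ^ t"
  by (simp add: Phi_alt PhiSet_d0)

lemma PhiSet_Suc:
  "PhiSet (Suc d) (Suc t) = PhiSet d (Suc t) \<union> (\<lambda>a. a(Suc d := Suc (a (Suc d)))) ` PhiSet (Suc d) t"
proof safe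
  fix a assume a: "a \<in> PhiSet (Suc d) (Suc t)" "a \<notin> (\<lambda>a. a(Suc d := Suc (a (Suc d)))) ` PhiSet (Suc d) t"
  show "a \<in> PhiSet d (Suc t)"
  proof (cases "a (Suc d) = 0")
    case True
    have "\<forall>i. d < i \<longrightarrow> a i = 0"
    proof (intro allI impI)
      fix i assume "d < i"
      then show "a i = 0" using True a(1) unfolding PhiSet_def
        by (cases "i = Suc d") auto
    qed
    then show ?thesis using a(1) True by (auto simp: PhiSet_def)
  next
    case False
    define b where "b = a(Suc d := a (Suc d) - 1)"
    have "b \<in> PhiSet (Suc d) t"
    proof -
      have "(\<Sum>i\<le>Suc d. b i) = (\<Sum>i\<le>d. a i) + (a (Suc d) - 1)"
        by (simp add: b_def)
      also have "\<dots> = t" using a(1) False by (simp add: PhiSet_def)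
      finally show ?thesis using a(1) by (auto simp: PhiSet_def b_def)
    qed
    moreover have "a = b(Suc d := Suc (b (Suc d)))" using False by (auto simp: b_def)
    ultimately show ?thesis using a(2) by blast
  qed
next
  fix a assume "a \<in> PhiSet d (Suc t)"
  then show "a \<in> PhiSet (Suc d) (Suc t)" by (auto simp: PhiSet_def)
next
  fix a assume "a \<in> PhiSet (Suc d) t"
  then show "a(Suc d := Suc (a (Suc d))) \<in> PhiSet (Suc d) (Suc t)"
    by (auto simp: PhiSet_def)
qed

lemma Phi_rec: "Phi gam (Suc d) (Suc t) = Phi gam d (Suc t) + gam (Suc d) * Phi gam (Suc d) t"
proof -
  let ?u = "\<lambda>a. a(Suc d := Suc (a (Suc d)))"
  have inj: "inj_on ?u (PhiSet (Suc d) t)"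
  proof (rule inj_onI, rule ext)
    fix x y i assume h: "?u x = ?u y"
    show "x i = y i" using fun_cong[OF h, of i] by (cases "i = Suc d") auto
  qed
  have disj: "PhiSet d (Suc t) \<inter> ?u ` PhiSet (Suc d) t = {}"
    by (auto simp: PhiSet_def)
  have "Phi gam (Suc d) (Suc t) = (\<Sum>a\<in>PhiSet d (Suc t). \<Prod>i\<le>Suc d. gam i ^ a i)
      + (\<Sum>a\<in>?u ` PhiSet (Suc d) t. \<Prod>i\<le>Suc d. gam i ^ a i)"
    unfolding Phi_alt PhiSet_Suc
    by (rule sum.union_disjoint) (auto simp: finite_PhiSet disj)
  also have "(\<Sum>a\<in>PhiSet d (Suc t). \<Prod>i\<le>Suc d. gam i ^ a i) = Phi gam d (Suc t)"
    unfolding Phi_alt by (intro sum.cong) (auto simp: PhiSet_def)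
  also have "(\<Sum>a\<in>?u ` PhiSet (Suc d) t. \<Prod>i\<le>Suc d. gam i ^ a i)
      = (\<Sum>a\<in>PhiSet (Suc d) t. \<Prod>i\<le>Suc d. gam i ^ ?u a i)"
    by (rule sum.reindex[OF inj, unfolded comp_def])
  also have "\<dots> = (\<Sum>a\<in>PhiSet (Suc d) t. gam (Suc d) * (\<Prod>i\<le>Suc d. gam i ^ a i))"
  proof (intro sum.cong refl)
    fix a
    have "(\<Prod>i\<le>d. gam i ^ ?u a i) = (\<Prod>i\<le>d. gam i ^ a i)"
      by (intro prod.cong) auto
    then show "(\<Prod>i\<le>Suc d. gam i ^ ?u a i) = gam (Suc d) * (\<Prod>i\<le>Suc d. gam i ^ a i)"
      by simp
  qed
  also have "\<dots> = gam (Suc d) * Phi gam (Suc d) t"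
    by (simp add: Phi_alt sum_distrib_left)
  finally show ?thesis .
qed

lemma Phi_rec0: "Phi gam 0 (Suc t) = gam 0 * Phi gam 0 t"
  by (simp add: Phi_d0)

lemma Phi_nonneg: "(\<And>i. i \<le> d \<Longrightarrow> 0 \<le> gam i) \<Longrightarrow> 0 \<le> Phi gam d t"
  unfolding Phi_def by (intro sum_nonneg prod_nonneg) auto


lemma Phi_summable:
  assumes "\<And>i. i \<le> d \<Longrightarrow> 0 < gam i \<and> gam i < 1"
  shows "summable (Phi gam d)"
  using assms
proof (induction d)
  case 0
  then show ?case by (simp add: Phi_d0 summable_geometric)
next
  case (Suc d)
  have pos: "\<And>i. i \<le> Suc d \<Longrightarrow> 0 \<le> gam i" using Suc.prems by (simp add: less_imp_le)
  have hs: "summable (Phi gam d)" by (rule Suc.IH) (simp add: Suc.prems)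
  have hnn: "\<And>t. 0 \<le> Phi gam d t" by (rule Phi_nonneg, rule pos) simp
  have gnn: "\<And>t. 0 \<le> Phi gam (Suc d) t" by (rule Phi_nonneg, rule pos) simp
  define c where "c = gam (Suc d)"
  have c: "0 < c" "c < 1" using Suc.prems[of "Suc d"] by (auto simp: c_def)
  define H where "H = suminf (Phi gam d)"
  have pSuc: "(\<Sum>t<Suc n. Phi gam (Suc d) t) \<le> (1 + H) / (1 - c)" for n
  proof -
    define p where "p = (\<Sum>t<Suc n. Phi gam (Suc d) t)"
    define q where "q = (\<Sum>t<n. Phi gam (Suc d) t)"
    define h where "h = (\<Sum>t<n. Phi gam d (Suc t))"
    have "p = Phi gam (Suc d) 0 + (\<Sum>t<n. Phi gam (Suc d) (Suc t))"
      unfolding p_def by (rule sum.lessThan_Suc_shift)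
    also have "(\<Sum>t<n. Phi gam (Suc d) (Suc t)) = h + c * q"
      unfolding h_def q_def c_def Phi_rec by (simp add: sum.distrib sum_distrib_left)
    finally have p1: "p = 1 + h + c * q" by (simp add: Phi_t0)
    have "h \<le> (\<Sum>t<Suc n. Phi gam d t)"
      unfolding h_def sum.lessThan_Suc_shift using hnn[of 0] by simp
    also have "\<dots> \<le> H" unfolding H_def by (rule sum_le_suminf[OF hs]) (auto simp: hnn)
    finally have h1: "h \<le> H" .
    have q1: "q \<le> p" unfolding p_def q_def using gnn[of n] by simp
    have "c * q \<le> c * p" using q1 c by (simp add: mult_left_mono)
    then have "p \<le> 1 + H + c * p" using p1 h1 by linarith
    then have "(1 - c) * p \<le> 1 + H" by (simp add: algebra_simps)
    then have "p \<le> (1 + H) / (1 - c)" using c by (simp add: pos_le_divide_eq mult.commute)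
    then show ?thesis unfolding p_def .
  qed
  have H0: "0 \<le> H" unfolding H_def using hs hnn by (simp add: suminf_nonneg)
  show ?case
  proof (rule summableI_nonneg_bounded[where x="(1 + H) / (1 - c)"])
    fix n show "(\<Sum>t<n. Phi gam (Suc d) t) \<le> (1 + H) / (1 - c)"
    proof (cases n)
      case 0
      have "0 \<le> (1 + H) / (1 - c)" using H0 c by (intro divide_nonneg_pos) auto
      then show ?thesis using 0 by simp
    next
      case (Suc m) then show ?thesis using pSuc[of m] by simp
    qed
  qed (rule gnn)
qed


lemma prob_int_bound:
  fixes f :: "'x \<Rightarrow> real"
  assumes "prob_space M" "f \<in> borel_measurable M" "\<And>x. x \<in> space M \<Longrightarrow> \<bar>f x\<bar> \<le> C"
  shows "\<bar>integral\<^sup>L M f\<bar> \<le> C"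
proof -
  interpret prob_space M by fact
  have int: "integrable M f"
    by (rule integrable_const_bound[where B=C]) (use assms in auto)
  have "\<bar>integral\<^sup>L M f\<bar> \<le> (\<integral>x. \<bar>f x\<bar> \<partial>M)" by (rule integral_abs_bound)
  also have "\<dots> \<le> (\<integral>x. C \<partial>M)"
    by (rule integral_mono) (use int assms in auto)
  also have "\<dots> = C" by (simp add: prob_space)
  finally show ?thesis .
qed

locale mdpK =
  fixes S :: "'s::euclidean_space set" and A :: "'a::euclidean_space set"
    and P :: "'s \<Rightarrow> 'a \<Rightarrow> 's measure" and pol :: "'s \<Rightarrow> 'a measure"
  assumes Pm: "(\<lambda>(s,a). P s a) \<in> measurable (restrict_space borel (S \<times> A)) (prob_algebra (restrict_space borel S))"
    and polm: "pol \<in> measurable (restrict_space borel S) (prob_algebra (restrict_space borel A))"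
begin

abbreviation "MeS \<equiv> restrict_space borel S"
abbreviation "MeA \<equiv> restrict_space borel A"
abbreviation "MeSA \<equiv> restrict_space borel (S \<times> A)"
abbreviation "K \<equiv> sa_step P pol"
abbreviation "B \<equiv> bfun_SA S A"

lemma P_facts: assumes "s \<in> S" "a \<in> A"
  shows "prob_space (P s a)" "sets (P s a) = sets MeS" "space (P s a) = S"
proof -
  have "(\<lambda>(s,a). P s a) (s,a) \<in> space (prob_algebra MeS)"
    using measurable_space[OF Pm, of "(s,a)"] assms by (simp add: space_restrict_space)
  then have *: "prob_space (P s a)" "sets (P s a) = sets MeS" by (auto simp: space_prob_algebra)
  then show "prob_space (P s a)" "sets (P s a) = sets MeS" by auto
  from *(2) show "space (P s a) = S" by (metis sets_eq_imp_space_eq space_restrict_space inf_top_right space_borel)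
qed

lemma pol_facts: assumes "s \<in> S"
  shows "prob_space (pol s)" "sets (pol s) = sets MeA" "space (pol s) = A"
proof -
  have "pol s \<in> space (prob_algebra MeA)"
    using measurable_space[OF polm, of s] assms by (simp add: space_restrict_space)
  then have *: "prob_space (pol s)" "sets (pol s) = sets MeA" by (auto simp: space_prob_algebra)
  then show "prob_space (pol s)" "sets (pol s) = sets MeA" by auto
  from *(2) show "space (pol s) = A" by (metis sets_eq_imp_space_eq space_restrict_space inf_top_right space_borel)
qed

lemma B_iff: "q \<in> B \<longleftrightarrow> (\<lambda>(s,a). q s a) \<in> borel_measurable MeSA \<and> (\<exists>M. \<forall>s\<in>S. \<forall>a\<in>A. \<bar>q s a\<bar> \<le> M)"
  unfolding bfun_SA_def bounded_real by auto

lemma id_meas: "(\<lambda>x. x) \<in> measurable (MeS \<Otimes>\<^sub>M MeA) MeSA"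
proof (rule measurable_restrict_space2)
  show "(\<lambda>x. x) \<in> space (MeS \<Otimes>\<^sub>M MeA) \<rightarrow> S \<times> A" by (auto simp: space_pair_measure space_restrict_space)
  have i1: "(\<lambda>x. x) \<in> measurable MeS borel" by (rule measurable_restrict_space1[OF measurable_id])
  have i2: "(\<lambda>x. x) \<in> measurable MeA borel" by (rule measurable_restrict_space1[OF measurable_id])
  have f: "fst \<in> measurable (MeS \<Otimes>\<^sub>M MeA) borel"
    using measurable_compose[OF measurable_fst[of MeS MeA] i1] by simp
  have g: "snd \<in> measurable (MeS \<Otimes>\<^sub>M MeA) borel"
    using measurable_compose[OF measurable_snd[of MeS MeA] i2] by simp
  have "(\<lambda>x. x) \<in> measurable (MeS \<Otimes>\<^sub>M MeA) (borel \<Otimes>\<^sub>M borel)"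
    using measurable_Pair[OF f g] by simp
  then show "(\<lambda>x. x) \<in> measurable (MeS \<Otimes>\<^sub>M MeA) borel" by (simp add: borel_prod)
qed

lemma meas_prod: "h \<in> borel_measurable MeSA \<Longrightarrow> h \<in> borel_measurable (MeS \<Otimes>\<^sub>M MeA)"
  using measurable_compose[OF id_meas] by auto

lemma integrable_pol: assumes "q \<in> B" "s \<in> S"
  shows "integrable (pol s) (q s)"
proof -
  interpret prob_space "pol s" using pol_facts assms by auto
  obtain M where M: "\<forall>s\<in>S. \<forall>a\<in>A. \<bar>q s a\<bar> \<le> M" using assms B_iff by auto
  have "(\<lambda>(s,a). q s a) \<in> borel_measurable (MeS \<Otimes>\<^sub>M MeA)" using assms B_iff meas_prod by auto
  then have "(\<lambda>a. (\<lambda>(s,a). q s a) (s, a)) \<in> borel_measurable MeA"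
    by (rule measurable_Pair2) (use assms in \<open>simp add: space_restrict_space\<close>)
  moreover have "measurable (pol s) (borel :: real measure) = measurable MeA borel"
    by (rule measurable_cong_sets) (simp_all add: pol_facts assms)
  ultimately have m: "q s \<in> borel_measurable (pol s)" by simp
  show ?thesis
    by (rule integrable_const_bound[where B=M]) (use m M assms pol_facts in auto)
qed

lemma inner_meas: assumes "q \<in> B"
  shows "(\<lambda>s'. \<integral>a'. q s' a' \<partial>pol s') \<in> borel_measurable MeS"
proof -
  have qm: "(\<lambda>(s,a). q s a) \<in> borel_measurable (MeS \<Otimes>\<^sub>M MeA)" using assms B_iff meas_prod by auto
  have polm': "pol \<in> measurable MeS (subprob_algebra MeA)" using polm by (rule measurable_prob_algebraD)
  have m1: "(\<lambda>s'. \<integral>\<^sup>+a'. ennreal (q s' a') \<partial>pol s') \<in> borel_measurable MeS"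
    by (rule nn_integral_measurable_subprob_algebra2[OF _ polm']) (use qm in measurable)
  have m2: "(\<lambda>s'. \<integral>\<^sup>+a'. ennreal (- q s' a') \<partial>pol s') \<in> borel_measurable MeS"
    by (rule nn_integral_measurable_subprob_algebra2[OF _ polm']) (use qm in measurable)
  have "(\<lambda>s'. enn2real (\<integral>\<^sup>+a'. ennreal (q s' a') \<partial>pol s') - enn2real (\<integral>\<^sup>+a'. ennreal (- q s' a') \<partial>pol s'))
     \<in> borel_measurable MeS" using m1 m2 by measurable
  then show ?thesis
    by (rule measurable_cong[THEN iffD1, rotated])
       (simp add: space_restrict_space real_lebesgue_integral_def[OF integrable_pol[OF assms]])
qed

lemma inner_bound: assumes "q \<in> B" "s' \<in> S" "\<forall>s\<in>S. \<forall>a\<in>A. \<bar>q s a\<bar> \<le> M"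
  shows "\<bar>\<integral>a'. q s' a' \<partial>pol s'\<bar> \<le> M"
proof (rule prob_int_bound)
  show "prob_space (pol s')" using pol_facts assms by auto
  show "q s' \<in> borel_measurable (pol s')" using integrable_pol[OF assms(1,2)] by auto
  show "\<And>x. x \<in> space (pol s') \<Longrightarrow> \<bar>q s' x\<bar> \<le> M" using assms pol_facts by auto
qed

lemma outer_meas: fixes g :: "'s \<Rightarrow> real" assumes "g \<in> borel_measurable MeS"
  shows "(\<lambda>(s,a). integral\<^sup>L (P s a) g) \<in> borel_measurable MeSA"
proof -
  have Pm': "(\<lambda>(s,a). P s a) \<in> measurable MeSA (subprob_algebra MeS)" using Pm by (rule measurable_prob_algebraD)
  have "(\<lambda>x. integral\<^sup>L ((\<lambda>(s,a). P s a) x) g) \<in> borel_measurable MeSA"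
    by (rule measurable_compose[OF Pm' integral_measurable_subprob_algebra[OF assms]])
  then show ?thesis by (simp add: case_prod_beta')
qed

lemma g_on_P: fixes g :: "'s \<Rightarrow> real" assumes "g \<in> borel_measurable MeS" "s \<in> S" "a \<in> A"
  shows "g \<in> borel_measurable (P s a)"
proof -
  have "measurable (P s a) (borel :: real measure) = measurable MeS borel"
    by (rule measurable_cong_sets) (simp_all add: P_facts assms)
  then show ?thesis using assms by simp
qed

lemma K_bound: assumes "q \<in> B" "\<forall>s\<in>S. \<forall>a\<in>A. \<bar>q s a\<bar> \<le> M" "s \<in> S" "a \<in> A"
  shows "\<bar>K q s a\<bar> \<le> M"
  unfolding sa_step_def
proof (rule prob_int_bound)
  show "prob_space (P s a)" using P_facts assms by auto
  show "(\<lambda>s'. \<integral>a'. q s' a' \<partial>pol s') \<in> borel_measurable (P s a)"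
    by (rule g_on_P[OF inner_meas[OF assms(1)] assms(3,4)])
  show "\<And>x. x \<in> space (P s a) \<Longrightarrow> \<bar>\<integral>a'. q x a' \<partial>pol x\<bar> \<le> M"
    using inner_bound[OF assms(1) _ assms(2)] P_facts assms by auto
qed

lemma K_B: assumes "q \<in> B" shows "K q \<in> B"
proof -
  obtain M where M: "\<forall>s\<in>S. \<forall>a\<in>A. \<bar>q s a\<bar> \<le> M" using assms B_iff by auto
  have "(\<lambda>(s,a). K q s a) \<in> borel_measurable MeSA"
    unfolding sa_step_def by (rule outer_meas[OF inner_meas[OF assms]])
  then show ?thesis using K_bound[OF assms M] B_iff by blast
qed

lemma integrable_P: assumes "q \<in> B" "s \<in> S" "a \<in> A"
  shows "integrable (P s a) (\<lambda>s'. \<integral>a'. q s' a' \<partial>pol s')"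
proof -
  interpret prob_space "P s a" using P_facts assms by auto
  obtain M where M: "\<forall>s\<in>S. \<forall>a\<in>A. \<bar>q s a\<bar> \<le> M" using assms B_iff by auto
  show ?thesis
    by (rule integrable_const_bound[where B=M])
       (use g_on_P[OF inner_meas[OF assms(1)] assms(2,3)] inner_bound[OF assms(1) _ M] P_facts[OF assms(2,3)] in auto)
qed

end

lemma ser_bound:
  fixes c X :: "nat \<Rightarrow> real"
  assumes "summable (\<lambda>t. \<bar>c t\<bar>)" "\<And>t. \<bar>X t\<bar> \<le> M"
  shows "summable (\<lambda>t. c t * X t)" "\<bar>\<Sum>t. c t * X t\<bar> \<le> (\<Sum>t. \<bar>c t\<bar>) * M"
proof -
  have b: "\<bar>c t * X t\<bar> \<le> \<bar>c t\<bar> * M" for t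
    using assms(2)[of t] by (simp add: abs_mult mult_left_mono)
  have s2: "summable (\<lambda>t. \<bar>c t\<bar> * M)" using assms(1) by (rule summable_mult2)
  have sa: "summable (\<lambda>t. \<bar>c t * X t\<bar>)"
    by (rule summable_comparison_test[OF _ s2]) (use b in auto)
  then show "summable (\<lambda>t. c t * X t)" by (rule summable_rabs_cancel)
  have "\<bar>\<Sum>t. c t * X t\<bar> \<le> (\<Sum>t. \<bar>c t * X t\<bar>)" using summable_rabs[OF sa] .
  also have "\<dots> \<le> (\<Sum>t. \<bar>c t\<bar> * M)" by (rule suminf_le[OF b sa s2])
  also have "\<dots> = (\<Sum>t. \<bar>c t\<bar>) * M" by (rule suminf_mult2[OF assms(1), symmetric])
  finally show "\<bar>\<Sum>t. c t * X t\<bar> \<le> (\<Sum>t. \<bar>c t\<bar>) * M" .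
qed

lemma suminf_integral_gen:
  fixes g :: "nat \<Rightarrow> 'x \<Rightarrow> real"
  assumes "prob_space M" "\<And>t. g t \<in> borel_measurable M"
    "\<And>t x. x \<in> space M \<Longrightarrow> \<bar>g t x\<bar> \<le> C" "summable (\<lambda>t. \<bar>c t\<bar>)"
  shows "(\<integral>x. (\<Sum>t. c t * g t x) \<partial>M) = (\<Sum>t. c t * integral\<^sup>L M (g t))"
proof -
  interpret prob_space M by fact
  have int: "integrable M (g t)" for t
    by (rule integrable_const_bound[where B=C]) (use assms in auto)
  have s2: "summable (\<lambda>t. \<bar>c t\<bar> * C)" using assms(4) by (rule summable_mult2)
  have "(\<integral>x. (\<Sum>t. c t * g t x) \<partial>M) = (\<Sum>t. integral\<^sup>L M (\<lambda>x. c t * g t x))"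
  proof (rule integral_suminf)
    show "integrable M (\<lambda>x. c t * g t x)" for t using int by simp
    show "AE x in M. summable (\<lambda>t. norm (c t * g t x))"
    proof (rule AE_I2)
      fix x assume x: "x \<in> space M"
      show "summable (\<lambda>t. norm (c t * g t x))"
        by (rule summable_comparison_test[OF _ s2])
           (use assms(3)[OF x] in \<open>auto simp: abs_mult mult_left_mono\<close>)
    qed
    show "summable (\<lambda>t. \<integral>x. norm (c t * g t x) \<partial>M)"
    proof (rule summable_comparison_test[OF _ s2], intro exI allI impI)
      fix t
      have "\<bar>\<integral>x. norm (c t * g t x) \<partial>M\<bar> \<le> \<bar>c t\<bar> * C"
        by (rule prob_int_bound[OF assms(1)]) (use assms(2,3) in \<open>auto simp: abs_mult mult_left_mono\<close>)
      then show "norm (\<integral>x. norm (c t * g t x) \<partial>M) \<le> \<bar>c t\<bar> * C" by simp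
    qed
  qed
  then show ?thesis by simp
qed

context mdpK begin

lemma B_cong: assumes "q \<in> B" "\<And>s a. s \<in> S \<Longrightarrow> a \<in> A \<Longrightarrow> q' s a = q s a"
  shows "q' \<in> B"
proof -
  obtain M where M: "\<forall>s\<in>S. \<forall>a\<in>A. \<bar>q s a\<bar> \<le> M" and m: "(\<lambda>(s,a). q s a) \<in> borel_measurable MeSA"
    using assms B_iff by auto
  have "(\<lambda>(s,a). q' s a) \<in> borel_measurable MeSA"
    using m by (rule measurable_cong[THEN iffD1, rotated]) (auto simp: space_restrict_space assms(2))
  then show ?thesis using M assms(2) B_iff by auto
qed

lemma B_add: assumes "q1 \<in> B" "q2 \<in> B"
  shows "(\<lambda>x y. q1 x y + c * q2 x y) \<in> B"
proof -
  obtain M1 where M1: "\<forall>s\<in>S. \<forall>a\<in>A. \<bar>q1 s a\<bar> \<le> M1" and m1: "(\<lambda>(s,a). q1 s a) \<in> borel_measurable MeSA"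
    using assms B_iff by auto
  obtain M2 where M2: "\<forall>s\<in>S. \<forall>a\<in>A. \<bar>q2 s a\<bar> \<le> M2" and m2: "(\<lambda>(s,a). q2 s a) \<in> borel_measurable MeSA"
    using assms B_iff by auto
  have "(\<lambda>z. (\<lambda>(s,a). q1 s a) z + c * (\<lambda>(s,a). q2 s a) z) \<in> borel_measurable MeSA"
    using m1 m2 by measurable
  moreover have "(\<lambda>z. (\<lambda>(s,a). q1 s a) z + c * (\<lambda>(s,a). q2 s a) z) = (\<lambda>(s,a). q1 s a + c * q2 s a)"
    by auto
  moreover have "\<forall>s\<in>S. \<forall>a\<in>A. \<bar>q1 s a + c * q2 s a\<bar> \<le> M1 + \<bar>c\<bar> * M2"
  proof (intro ballI)
    fix s a assume "s \<in> S" "a \<in> A"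
    then have "\<bar>q1 s a\<bar> \<le> M1" "\<bar>q2 s a\<bar> \<le> M2" using M1 M2 by auto
    then have "\<bar>c * q2 s a\<bar> \<le> \<bar>c\<bar> * M2" by (simp add: abs_mult mult_left_mono)
    then show "\<bar>q1 s a + c * q2 s a\<bar> \<le> M1 + \<bar>c\<bar> * M2" using \<open>\<bar>q1 s a\<bar> \<le> M1\<close> by linarith
  qed
  ultimately show ?thesis using B_iff by auto
qed

lemma B_const: "(\<lambda>x y. c) \<in> B"
  unfolding B_iff by auto

lemma B_sum: assumes "finite I" "\<And>i. i \<in> I \<Longrightarrow> f i \<in> B"
  shows "(\<lambda>x y. \<Sum>i\<in>I. c i * f i x y) \<in> B"
  using assms
proof (induction I rule: finite_induct)
  case empty
  then show ?case using B_const[of 0] by simp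
next
  case (insert j I)
  have "(\<lambda>x y. (\<Sum>i\<in>I. c i * f i x y) + c j * f j x y) \<in> B"
    by (rule B_add) (use insert in auto)
  then show ?case by (rule B_cong) (simp add: insert)
qed

lemma K_cong: assumes "\<And>x y. x \<in> S \<Longrightarrow> y \<in> A \<Longrightarrow> q1 x y = q2 x y" "s \<in> S" "a \<in> A"
  shows "K q1 s a = K q2 s a"
  unfolding sa_step_def
  by (intro Bochner_Integration.integral_cong refl) (use assms P_facts pol_facts in auto)

lemma K_const: assumes "s \<in> S" "a \<in> A" shows "K (\<lambda>x y. c) s a = c"
proof -
  have "K (\<lambda>x y. c) s a = (\<integral>s'. c \<partial>P s a)"
    unfolding sa_step_def
  proof (intro Bochner_Integration.integral_cong refl)
    fix s' assume "s' \<in> space (P s a)"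
    then have s': "s' \<in> S" using P_facts assms by auto
    have "measure (pol s') (space (pol s')) = 1" by (rule prob_space.prob_space[OF pol_facts(1)[OF s']])
    then show "(\<integral>a'. c \<partial>pol s') = c" by simp
  qed
  also have "\<dots> = c"
  proof -
    have "measure (P s a) (space (P s a)) = 1" by (rule prob_space.prob_space[OF P_facts(1)[OF assms]])
    then show ?thesis by simp
  qed
  finally show ?thesis .
qed

lemma K_add: assumes "q1 \<in> B" "q2 \<in> B" "s \<in> S" "a \<in> A"
  shows "K (\<lambda>x y. q1 x y + c * q2 x y) s a = K q1 s a + c * K q2 s a"
proof -
  have "K (\<lambda>x y. q1 x y + c * q2 x y) s a
      = (\<integral>s'. (\<integral>a'. q1 s' a' \<partial>pol s') + c * (\<integral>a'. q2 s' a' \<partial>pol s') \<partial>P s a)"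
    unfolding sa_step_def
  proof (intro Bochner_Integration.integral_cong refl)
    fix s' assume "s' \<in> space (P s a)"
    then have s': "s' \<in> S" using P_facts assms by auto
    show "(\<integral>a'. q1 s' a' + c * q2 s' a' \<partial>pol s') = (\<integral>a'. q1 s' a' \<partial>pol s') + c * (\<integral>a'. q2 s' a' \<partial>pol s')"
      using integrable_pol[OF assms(1) s'] integrable_pol[OF assms(2) s'] by simp
  qed
  also have "\<dots> = K q1 s a + c * K q2 s a"
    unfolding sa_step_def using integrable_P[OF assms(1,3,4)] integrable_P[OF assms(2,3,4)] by simp
  finally show ?thesis .
qed

lemma K_const_add: assumes "q \<in> B" "s \<in> S" "a \<in> A"
  shows "K (\<lambda>x y. c + q x y) s a = c + K q s a"
  using K_add[OF B_const assms, of c 1] K_const[OF assms(2,3)] by simp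

lemma K_sum: assumes "finite I" "\<And>i. i \<in> I \<Longrightarrow> f i \<in> B" "s \<in> S" "a \<in> A"
  shows "K (\<lambda>x y. \<Sum>i\<in>I. c i * f i x y) s a = (\<Sum>i\<in>I. c i * K (f i) s a)"
  using assms(1,2)
proof (induction I rule: finite_induct)
  case empty
  then show ?case using K_const[OF assms(3,4), of 0] by simp
next
  case (insert j I)
  have "K (\<lambda>x y. \<Sum>i\<in>insert j I. c i * f i x y) s a = K (\<lambda>x y. (\<Sum>i\<in>I. c i * f i x y) + c j * f j x y) s a"
    by (rule K_cong) (use insert assms in auto)
  also have "\<dots> = K (\<lambda>x y. (\<Sum>i\<in>I. c i * f i x y)) s a + c j * K (f j) s a"
  proof (rule K_add)
    show "(\<lambda>x y. \<Sum>i\<in>I. c i * f i x y) \<in> B" by (rule B_sum) (use insert.hyps insert.prems in auto)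
  qed (use insert assms in auto)
  finally show ?case using insert by simp
qed

lemma B_suminf: assumes "\<And>t. f t \<in> B" "\<And>t x y. x \<in> S \<Longrightarrow> y \<in> A \<Longrightarrow> \<bar>f t x y\<bar> \<le> M"
    "summable (\<lambda>t. \<bar>c t\<bar>)"
  shows "(\<lambda>x y. \<Sum>t. c t * f t x y) \<in> B"
proof -
  have m: "(\<lambda>(x,y). f t x y) \<in> borel_measurable MeSA" for t using assms(1) B_iff by auto
  have "(\<lambda>z. \<Sum>t. c t * (\<lambda>(x,y). f t x y) z) \<in> borel_measurable MeSA"
    using m by measurable
  moreover have "(\<lambda>z. \<Sum>t. c t * (\<lambda>(x,y). f t x y) z) = (\<lambda>(x,y). \<Sum>t. c t * f t x y)"
    by auto
  moreover have "\<forall>s\<in>S. \<forall>a\<in>A. \<bar>\<Sum>t. c t * f t s a\<bar> \<le> (\<Sum>t. \<bar>c t\<bar>) * M"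
    by (intro ballI ser_bound(2)[OF assms(3)] assms(2))
  ultimately show ?thesis using B_iff by auto
qed

lemma K_suminf: assumes "\<And>t. f t \<in> B" "\<And>t x y. x \<in> S \<Longrightarrow> y \<in> A \<Longrightarrow> \<bar>f t x y\<bar> \<le> M"
    "summable (\<lambda>t. \<bar>c t\<bar>)" "s \<in> S" "a \<in> A"
  shows "K (\<lambda>x y. \<Sum>t. c t * f t x y) s a = (\<Sum>t. c t * K (f t) s a)"
proof -
  have M: "\<forall>s\<in>S. \<forall>a\<in>A. \<bar>f t s a\<bar> \<le> M" for t using assms(2) by auto
  have "K (\<lambda>x y. \<Sum>t. c t * f t x y) s a
      = (\<integral>s'. (\<Sum>t. c t * (\<integral>a'. f t s' a' \<partial>pol s')) \<partial>P s a)"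
    unfolding sa_step_def
  proof (intro Bochner_Integration.integral_cong refl)
    fix s' assume "s' \<in> space (P s a)"
    then have s': "s' \<in> S" using P_facts assms by auto
    show "(\<integral>a'. (\<Sum>t. c t * f t s' a') \<partial>pol s') = (\<Sum>t. c t * (\<integral>a'. f t s' a' \<partial>pol s'))"
      by (rule suminf_integral_gen[where C=M])
         (use pol_facts[OF s'] integrable_pol[OF assms(1) s'] assms(2,3) s' in auto)
  qed
  also have "\<dots> = (\<Sum>t. c t * K (f t) s a)"
    unfolding sa_step_def
    by (rule suminf_integral_gen[where C=M])
       (use P_facts[OF assms(4,5)] g_on_P[OF inner_meas[OF assms(1)] assms(4,5)] inner_bound[OF assms(1) _ M] assms(3) in auto)
  finally show ?thesis .
qed

end

lemma Phi_abs_summable: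
  assumes "\<And>i. i \<le> d \<Longrightarrow> 0 < gam i \<and> gam i < 1"
  shows "summable (\<lambda>t. \<bar>Phi gam d t\<bar>)"
proof -
  have "(\<lambda>t. \<bar>Phi gam d t\<bar>) = Phi gam d"
    by (rule ext, rule abs_of_nonneg, rule Phi_nonneg) (use assms less_imp_le in blast)
  then show ?thesis using Phi_summable[OF assms] by simp
qed

lemma series_base:
  fixes X :: "nat \<Rightarrow> real"
  assumes g: "0 < gam 0" "gam 0 < 1" and X: "\<And>t. \<bar>X t\<bar> \<le> M"
  shows "(\<Sum>t. Phi gam 0 t * X t) = X 0 + gam 0 * (\<Sum>t. Phi gam 0 t * X (Suc t))"
proof -
  have ps: "summable (\<lambda>t. \<bar>Phi gam 0 t\<bar>)" by (rule Phi_abs_summable) (use g in auto)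
  have sa: "summable (\<lambda>t. Phi gam 0 t * X t)" by (rule ser_bound(1)[OF ps X])
  have sw: "summable (\<lambda>t. Phi gam 0 t * X (Suc t))" by (rule ser_bound(1)[OF ps X])
  have "(\<Sum>t. Phi gam 0 (Suc t) * X (Suc t)) = (\<Sum>t. Phi gam 0 t * X t) - Phi gam 0 0 * X 0"
    by (rule suminf_split_head[OF sa])
  moreover have "(\<Sum>t. Phi gam 0 (Suc t) * X (Suc t)) = gam 0 * (\<Sum>t. Phi gam 0 t * X (Suc t))"
    unfolding Phi_rec0 mult.assoc by (rule suminf_mult[OF sw])
  ultimately show ?thesis by (simp add: Phi_t0)
qed

lemma series_step:
  fixes X :: "nat \<Rightarrow> real"
  assumes g: "\<And>i. i \<le> Suc d \<Longrightarrow> 0 < gam i \<and> gam i < 1" and X: "\<And>t. \<bar>X t\<bar> \<le> M"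
  shows "(\<Sum>t. Phi gam (Suc d) t * X t)
       = (\<Sum>t. Phi gam d t * X t) + gam (Suc d) * (\<Sum>t. Phi gam (Suc d) t * X (Suc t))"
proof -
  have ps: "summable (\<lambda>t. \<bar>Phi gam (Suc d) t\<bar>)" by (rule Phi_abs_summable) (use g in auto)
  have pd: "summable (\<lambda>t. \<bar>Phi gam d t\<bar>)" by (rule Phi_abs_summable) (use g in auto)
  have sa: "summable (\<lambda>t. Phi gam (Suc d) t * X t)" by (rule ser_bound(1)[OF ps X])
  have sb: "summable (\<lambda>t. Phi gam d t * X t)" by (rule ser_bound(1)[OF pd X])
  have sw: "summable (\<lambda>t. Phi gam (Suc d) t * X (Suc t))" by (rule ser_bound(1)[OF ps X])
  have sb': "summable (\<lambda>t. Phi gam d (Suc t) * X (Suc t))"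
    using sb summable_Suc_iff[of "\<lambda>t. Phi gam d t * X t"] by simp
  have sw': "summable (\<lambda>t. gam (Suc d) * (Phi gam (Suc d) t * X (Suc t)))"
    by (rule summable_mult[OF sw])
  have e1: "(\<Sum>t. Phi gam (Suc d) (Suc t) * X (Suc t)) = (\<Sum>t. Phi gam (Suc d) t * X t) - Phi gam (Suc d) 0 * X 0"
    by (rule suminf_split_head[OF sa])
  have e2: "(\<Sum>t. Phi gam d (Suc t) * X (Suc t)) = (\<Sum>t. Phi gam d t * X t) - Phi gam d 0 * X 0"
    by (rule suminf_split_head[OF sb])
  have "(\<Sum>t. Phi gam (Suc d) (Suc t) * X (Suc t))
      = (\<Sum>t. Phi gam d (Suc t) * X (Suc t) + gam (Suc d) * (Phi gam (Suc d) t * X (Suc t)))"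
    unfolding Phi_rec by (simp add: algebra_simps)
  also have "\<dots> = (\<Sum>t. Phi gam d (Suc t) * X (Suc t)) + (\<Sum>t. gam (Suc d) * (Phi gam (Suc d) t * X (Suc t)))"
    by (rule suminf_add[OF sb' sw', symmetric])
  also have "(\<Sum>t. gam (Suc d) * (Phi gam (Suc d) t * X (Suc t))) = gam (Suc d) * (\<Sum>t. Phi gam (Suc d) t * X (Suc t))"
    by (rule suminf_mult[OF sw])
  finally show ?thesis using e1 e2 by (simp add: Phi_t0)
qed

theorem proposition1:
  fixes S :: "'s::euclidean_space set" and A :: "'a::euclidean_space set"
    and P :: "'s \<Rightarrow> 'a \<Rightarrow> 's measure" and pol :: "'s \<Rightarrow> 'a measure"
    and r :: "'s \<Rightarrow> 'a \<Rightarrow> real" and gam :: "nat \<Rightarrow> real" and D :: nat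
  assumes "compact S" "S \<noteq> {}" "compact A" "A \<noteq> {}"
    and "(\<lambda>(s,a). P s a) \<in> measurable (restrict_space borel (S \<times> A)) (prob_algebra (restrict_space borel S))"
    and "pol \<in> measurable (restrict_space borel S) (prob_algebra (restrict_space borel A))"
    and "continuous_on (S \<times> A) (\<lambda>(s,a). r s a)"
    and "\<And>i. i \<le> D \<Longrightarrow> 0 < gam i \<and> gam i < 1"
  shows "(\<forall>q \<in> bfun_SA S A. TD P pol r gam D q \<in> bfun_SA S A)
       \<and> (\<forall>q1 \<in> bfun_SA S A. \<forall>q2 \<in> bfun_SA S A.
            sup_dist S A (TD P pol r gam D q1) (TD P pol r gam D q2) \<le> gam D * sup_dist S A q1 q2)
       \<and> Qfun P pol r gam D \<in> bfun_SA S A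
       \<and> (\<forall>s\<in>S. \<forall>a\<in>A. TD P pol r gam D (Qfun P pol r gam D) s a = Qfun P pol r gam D s a)
       \<and> (\<forall>q \<in> bfun_SA S A. (\<forall>s\<in>S. \<forall>a\<in>A. TD P pol r gam D q s a = q s a)
            \<longrightarrow> (\<forall>s\<in>S. \<forall>a\<in>A. q s a = Qfun P pol r gam D s a))"
proof -
  interpret mdpK S A P pol by unfold_locales (rule assms(5), rule assms(6))
  note gam = assms(8)
  have gD: "0 < gam D" "gam D < 1" using gam[of D] by auto
  have rm: "(\<lambda>(s,a). r s a) \<in> borel_measurable MeSA"
    by (rule borel_measurable_continuous_on_restrict[OF assms(7)])
  have "bounded ((\<lambda>(s,a). r s a) ` (S \<times> A))"
    by (rule compact_imp_bounded[OF compact_continuous_image[OF assms(7) compact_Times[OF assms(1,3)]]])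
  then obtain Mr where Mr: "\<forall>s\<in>S. \<forall>a\<in>A. \<bar>r s a\<bar> \<le> Mr" unfolding bounded_real by auto
  have rB: "r \<in> B" using rm Mr B_iff by auto
  define R where "R t = (K ^^ t) r" for t
  have RS: "R (Suc t) = K (R t)" for t by (simp add: R_def)
  have R0: "R 0 = r" by (simp add: R_def)
  have RB: "R t \<in> B" for t by (induction t) (simp_all add: RS R0 rB K_B)
  have RM: "\<bar>R t x y\<bar> \<le> Mr" if "x \<in> S" "y \<in> A" for t x y
    using that
  proof (induction t arbitrary: x y)
    case 0 then show ?case using Mr by (simp add: R0)
  next
    case (Suc t)
    show ?case unfolding RS by (rule K_bound[OF RB _ Suc.prems]) (use Suc.IH in auto)
  qed
  have Phis: "summable (\<lambda>t. \<bar>Phi gam d t\<bar>)" if "d \<le> D" for d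
    by (rule Phi_abs_summable) (use gam that in auto)
  define Q where "Q d = Qfun P pol r gam d" for d
  have Qeq: "Q d = (\<lambda>x y. \<Sum>t. Phi gam d t * R t x y)" for d
    by (simp add: Q_def Qfun_def R_def fun_eq_iff)
  have QB: "Q d \<in> B" if "d \<le> D" for d
    unfolding Qeq by (rule B_suminf[OF RB RM Phis[OF that]])
  define W where "W d x y = (\<Sum>t. Phi gam d t * R (Suc t) x y)" for d x y
  have KQ: "K (Q d) x y = W d x y" if "d \<le> D" "x \<in> S" "y \<in> A" for d x y
    unfolding Qeq W_def RS by (rule K_suminf[OF RB RM Phis[OF that(1)] that(2,3)])
  have Qrec: "Q d x y = r x y + (\<Sum>d'\<le>d. gam d' * W d' x y)" if "d \<le> D" "x \<in> S" "y \<in> A" for d x y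
    using that(1)
  proof (induction d)
    case 0
    have "Q 0 x y = R 0 x y + gam 0 * W 0 x y"
      unfolding Qeq W_def
      by (rule series_base[where M=Mr]) (use gam RM that in auto)
    then show ?case by (simp add: R0)
  next
    case (Suc d)
    have "Q (Suc d) x y = Q d x y + gam (Suc d) * W (Suc d) x y"
      unfolding Qeq W_def
      by (rule series_step[where M=Mr]) (use gam RM that Suc.prems in auto)
    then show ?case using Suc by simp
  qed
  define F where "F = (\<lambda>x y. \<Sum>d<D. gam d * Q d x y)"
  have FB: "F \<in> B" unfolding F_def by (rule B_sum) (use QB in auto)
  have KF: "K F x y = (\<Sum>d<D. gam d * W d x y)" if "x \<in> S" "y \<in> A" for x y
  proof -
    have "K F x y = (\<Sum>d<D. gam d * K (Q d) x y)"
      unfolding F_def by (rule K_sum) (use QB that in auto)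
    also have "\<dots> = (\<Sum>d<D. gam d * W d x y)"
      by (intro sum.cong refl) (use KQ that in auto)
    finally show ?thesis .
  qed
  have TDeq: "TD P pol r gam D q x y = r x y + K F x y + gam D * K q x y" if "x \<in> S" "y \<in> A" for q x y
  proof -
    have "TD P pol r gam D q x y = K (\<lambda>s' a'. r x y + F s' a') x y + gam D * K q x y"
      by (simp add: TD_def F_def Q_def)
    also have "K (\<lambda>s' a'. r x y + F s' a') x y = r x y + K F x y"
      by (rule K_const_add[OF FB that])
    finally show ?thesis .
  qed
  have TDB: "TD P pol r gam D q \<in> B" if q: "q \<in> B" for q
  proof -
    have "(\<lambda>x y. (\<lambda>x y. r x y + 1 * K F x y) x y + gam D * K q x y) \<in> B"
      by (intro B_add rB K_B FB q)
    then show ?thesis by (rule B_cong) (simp add: TDeq)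
  qed
  have bd: "\<exists>M. \<forall>s\<in>S. \<forall>a\<in>A. \<bar>q s a\<bar> \<le> M" if "q \<in> B" for q using that B_iff by auto
  have sd_upper: "\<bar>q1 x y - q2 x y\<bar> \<le> sup_dist S A q1 q2"
    if hq: "q1 \<in> B" "q2 \<in> B" "x \<in> S" "y \<in> A" for q1 q2 x y
  proof -
    obtain M1 where M1: "\<forall>s\<in>S. \<forall>a\<in>A. \<bar>q1 s a\<bar> \<le> M1" using bd[OF hq(1)] by auto
    obtain M2 where M2: "\<forall>s\<in>S. \<forall>a\<in>A. \<bar>q2 s a\<bar> \<le> M2" using bd[OF hq(2)] by auto
    have "bdd_above ((\<lambda>z. \<bar>q1 (fst z) (snd z) - q2 (fst z) (snd z)\<bar>) ` (S \<times> A))"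
    proof (rule bdd_aboveI2[where M="M1 + M2"])
      fix z assume "z \<in> S \<times> A"
      then have "\<bar>q1 (fst z) (snd z)\<bar> \<le> M1" "\<bar>q2 (fst z) (snd z)\<bar> \<le> M2" using M1 M2 by auto
      then show "\<bar>q1 (fst z) (snd z) - q2 (fst z) (snd z)\<bar> \<le> M1 + M2" by linarith
    qed
    then have "(\<lambda>z. \<bar>q1 (fst z) (snd z) - q2 (fst z) (snd z)\<bar>) (x, y) \<le> sup_dist S A q1 q2"
      unfolding sup_dist_def by (intro cSUP_upper) (use hq in auto)
    then show ?thesis by simp
  qed
  have sd_least: "sup_dist S A q1 q2 \<le> C"
    if "\<And>x y. x \<in> S \<Longrightarrow> y \<in> A \<Longrightarrow> \<bar>q1 x y - q2 x y\<bar> \<le> C" for q1 q2 C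
    unfolding sup_dist_def by (rule cSUP_least) (use assms(2,4) that in auto)
  have pt: "\<bar>TD P pol r gam D q1 x y - TD P pol r gam D q2 x y\<bar> \<le> gam D * sup_dist S A q1 q2"
    if "q1 \<in> B" "q2 \<in> B" "x \<in> S" "y \<in> A" for q1 q2 x y
  proof -
    have dB: "(\<lambda>x y. q1 x y + (-1) * q2 x y) \<in> B" by (rule B_add[OF that(1,2)])
    have "TD P pol r gam D q1 x y - TD P pol r gam D q2 x y = gam D * (K q1 x y + (-1) * K q2 x y)"
      using TDeq[OF that(3,4)] by (simp add: algebra_simps)
    also have "K q1 x y + (-1) * K q2 x y = K (\<lambda>x y. q1 x y + (-1) * q2 x y) x y"
      by (rule K_add[OF that, symmetric])
    finally have e: "TD P pol r gam D q1 x y - TD P pol r gam D q2 x y = gam D * K (\<lambda>x y. q1 x y + (-1) * q2 x y) x y" .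
    have "\<bar>K (\<lambda>x y. q1 x y + (-1) * q2 x y) x y\<bar> \<le> sup_dist S A q1 q2"
      by (rule K_bound[OF dB _ that(3,4)]) (use sd_upper[OF that(1,2)] in auto)
    then show ?thesis unfolding e using gD by (simp add: abs_mult mult_left_mono)
  qed
  have P1: "\<forall>q \<in> B. TD P pol r gam D q \<in> B" using TDB by auto
  have P2: "\<forall>q1 \<in> B. \<forall>q2 \<in> B.
            sup_dist S A (TD P pol r gam D q1) (TD P pol r gam D q2) \<le> gam D * sup_dist S A q1 q2"
  proof (intro ballI)
    fix q1 q2 assume h: "q1 \<in> B" "q2 \<in> B"
    show "sup_dist S A (TD P pol r gam D q1) (TD P pol r gam D q2) \<le> gam D * sup_dist S A q1 q2"
      by (rule sd_least) (rule pt[OF h]; assumption)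
  qed
  have P3: "Qfun P pol r gam D \<in> B" using QB[of D] by (simp add: Q_def)
  have fixQ: "TD P pol r gam D (Q D) x y = Q D x y" if "x \<in> S" "y \<in> A" for x y
  proof -
    have "TD P pol r gam D (Q D) x y = r x y + (\<Sum>d<D. gam d * W d x y) + gam D * W D x y"
      using TDeq[OF that] KF[OF that] KQ[OF _ that, of D] by simp
    also have "\<dots> = r x y + (\<Sum>d\<le>D. gam d * W d x y)"
    proof -
      have "(\<Sum>d\<le>D. gam d * W d x y) = (\<Sum>d<D. gam d * W d x y) + gam D * W D x y"
        using sum.lessThan_Suc[of "\<lambda>d. gam d * W d x y" D] unfolding lessThan_Suc_atMost .
      then show ?thesis by simp
    qed
    also have "\<dots> = Q D x y" using Qrec[OF _ that, of D] by simp
    finally show ?thesis .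
  qed
  have P4: "\<forall>s\<in>S. \<forall>a\<in>A. TD P pol r gam D (Qfun P pol r gam D) s a = Qfun P pol r gam D s a"
    using fixQ by (simp add: Q_def)
  have P5: "\<forall>s\<in>S. \<forall>a\<in>A. q s a = Qfun P pol r gam D s a"
    if q: "q \<in> B" and fq: "\<forall>s\<in>S. \<forall>a\<in>A. TD P pol r gam D q s a = q s a" for q
  proof -
    have QDB: "Q D \<in> B" using QB by simp
    define \<delta> where "\<delta> = sup_dist S A q (Q D)"
    have "\<delta> \<le> gam D * \<delta>"
      unfolding \<delta>_def
    proof (rule sd_least)
      fix x y assume xy: "x \<in> S" "y \<in> A"
      have "\<bar>q x y - Q D x y\<bar> = \<bar>TD P pol r gam D q x y - TD P pol r gam D (Q D) x y\<bar>"
        using fq fixQ xy by simp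
      also have "\<dots> \<le> gam D * sup_dist S A q (Q D)" by (rule pt[OF q QDB xy])
      finally show "\<bar>q x y - Q D x y\<bar> \<le> gam D * sup_dist S A q (Q D)" .
    qed
    then have d0: "\<delta> \<le> 0"
    proof -
      assume a: "\<delta> \<le> gam D * \<delta>"
      show "\<delta> \<le> 0"
      proof (rule ccontr)
        assume "\<not> \<delta> \<le> 0"
        then have "0 < (1 - gam D) * \<delta>" using gD by (intro mult_pos_pos) auto
        then show False using a by (simp add: algebra_simps)
      qed
    qed
    show ?thesis
    proof (intro ballI)
      fix s a assume sa: "s \<in> S" "a \<in> A"
      have "\<bar>q s a - Q D s a\<bar> \<le> \<delta>" unfolding \<delta>_def by (rule sd_upper[OF q QDB sa])
      then have "q s a = Q D s a" using d0 by linarith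
      then show "q s a = Qfun P pol r gam D s a" by (simp add: Q_def)
    qed
  qed
  have P5': "\<forall>q \<in> B. (\<forall>s\<in>S. \<forall>a\<in>A. TD P pol r gam D q s a = q s a)
            \<longrightarrow> (\<forall>s\<in>S. \<forall>a\<in>A. q s a = Qfun P pol r gam D s a)"
  proof (rule ballI, rule impI)
    fix q assume "q \<in> B" "\<forall>s\<in>S. \<forall>a\<in>A. TD P pol r gam D q s a = q s a"
    then show "\<forall>s\<in>S. \<forall>a\<in>A. q s a = Qfun P pol r gam D s a" by (rule P5)
  qed
  show ?thesis by (rule conjI[OF P1 conjI[OF P2 conjI[OF P3 conjI[OF P4 P5']]]])
qed

end
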